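(* Let $P$ be any school choice problem and let $G^{\mathrm{DA}(P)}$ be the envy digraph of the DA matching. A student $i \in I$ is unimprovable if and only if $i$ does not lie on any directed cycle of $G^{\mathrm{DA}(P)}$, i.e. there do not exist $k\ge 1$ and distinct students $i=i_0,i_1,\dots,i_k$ with edges $(i_0,i_1),(i_1,i_2),\dots,(i_{k-1},i_k),(i_k,i_0)$ in $G^{\mathrm{DA}(P)}$.
   Context: A school choice problem $P$ consists of a finite set of students $I$, a finite set of schools $S$ (possibly containing a null school $s_\emptyset$ of unlimited capacity), for each student $i$ a strict preference $\succ_i$ over $S$, and for each school $s$ a quota $q_s$ and a strict priority order $\triangleright_s$ over $I$. A matching $\mu:I\to S$ assigns at most $q_s$ students to each school $s$. Matching $\mu$ weakly Pareto-dominates $\nu$ if every student weakly prefers $\mu_i$ to $\nu_i$; it Pareto-dominates $\nu$ if in addition some student strictly prefers $\mu_j$ to $\nu_j$; a matching is Pareto-efficient if no matching Pareto-dominates it. $\mathrm{DA}(P)$ is the matching produced by the student-proposing deferred acceptance algorithm: in each round, every student not tentatively held applies to her most preferred school that has not yet rejected her; each school tentatively holds the highest-priority applicants (new and previously held) up to its quota and rejects the rest; the algorithm stops when a round has no new rejection. $\mathrm{DA}_i(P)$ is $i$'s assigned school. Let $\mathcal M(P)$ be the set of Pareto-efficient matchings that weakly Pareto-dominate $\mathrm{DA}(P)$. A student $i$ is unimprovable if $\mu_i=\mathrm{DA}_i(P)$ for every $\mu\in\mathcal M(P)$ (improvable otherwise). The envy digraph $G^{\mathrm{DA}(P)}$ has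 vertex set $I$ and a directed edge $(i,j)$ iff $i$ strictly prefers $\mathrm{DA}_j(P)$ to $\mathrm{DA}_i(P)$ ("$i$ envies $j$"). *)

theory Defs
  imports Main
begin

text \<open>A school choice problem. (s,t) in pref P i means: student i strictly prefers s to t.
  (i,j) in prio P s means: student i has strictly higher priority than j at school s.\<close>

record ('i, 's) problem =
  students :: "'i set"
  schools  :: "'s set"
  pref     :: "'i \<Rightarrow> ('s \<times> 's) set"
  quota    :: "'s \<Rightarrow> nat"
  prio     :: "'s \<Rightarrow> ('i \<times> 'i) set"

text \<open>A null school of unlimited capacity is modelled as a school whose
  quota is at least the number of students; the capacity condition guarantees that a
  matching (a total assignment of students to schools) exists.\<close>

definition school_choice :: "('i, 's) problem \<Rightarrow> bool" where
  "school_choice P \<longleftrightarrow>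
     finite (students P) \<and> finite (schools P) \<and>
     (\<forall>i\<in>students P. pref P i \<subseteq> schools P \<times> schools P \<and>
                      strict_linear_order_on (schools P) (pref P i)) \<and>
     (\<forall>s\<in>schools P. prio P s \<subseteq> students P \<times> students P \<and>
                     strict_linear_order_on (students P) (prio P s)) \<and>
     card (students P) \<le> (\<Sum>s\<in>schools P. quota P s)"

definition is_matching :: "('i, 's) problem \<Rightarrow> ('i \<Rightarrow> 's) \<Rightarrow> bool" where
  "is_matching P \<mu> \<longleftrightarrow>
     (\<forall>i\<in>students P. \<mu> i \<in> schools P) \<and>
     (\<forall>s\<in>schools P. card {i\<in>students P. \<mu> i = s} \<le> quota P s)"

definition weakly_prefers :: "('i, 's) problem \<Rightarrow> 'i \<Rightarrow> 's \<Rightarrow> 's \<Rightarrow> bool" where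
  "weakly_prefers P i s t \<longleftrightarrow> s = t \<or> (s, t) \<in> pref P i"

definition weakly_dominates :: "('i, 's) problem \<Rightarrow> ('i \<Rightarrow> 's) \<Rightarrow> ('i \<Rightarrow> 's) \<Rightarrow> bool" where
  "weakly_dominates P \<mu> \<nu> \<longleftrightarrow> (\<forall>i\<in>students P. weakly_prefers P i (\<mu> i) (\<nu> i))"

definition dominates :: "('i, 's) problem \<Rightarrow> ('i \<Rightarrow> 's) \<Rightarrow> ('i \<Rightarrow> 's) \<Rightarrow> bool" where
  "dominates P \<mu> \<nu> \<longleftrightarrow> weakly_dominates P \<mu> \<nu> \<and> (\<exists>j\<in>students P. (\<mu> j, \<nu> j) \<in> pref P j)"

definition pareto_efficient :: "('i, 's) problem \<Rightarrow> ('i \<Rightarrow> 's) \<Rightarrow> bool" where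
  "pareto_efficient P \<mu> \<longleftrightarrow> is_matching P \<mu> \<and> \<not> (\<exists>\<nu>. is_matching P \<nu> \<and> dominates P \<nu> \<mu>)"

text \<open>The state of DA records, for every student, the set of schools that have rejected her.\<close>

definition best :: "('i, 's) problem \<Rightarrow> 'i \<Rightarrow> 's set \<Rightarrow> 's option" where
  "best P i X = (if X = {} then None
                 else Some (THE s. s \<in> X \<and> (\<forall>t\<in>X - {s}. (s, t) \<in> pref P i)))"

text \<open>School a student applies to in the current round: her most preferred school that
  has not rejected her yet. (A student tentatively held at s applies to s again; this is
  the same as s "holding" her.)\<close>

definition applies :: "('i, 's) problem \<Rightarrow> ('i \<Rightarrow> 's set) \<Rightarrow> 'i \<Rightarrow> 's option" where
  "applies P R i = best P i (schools P - R i)"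

definition rejected :: "('i, 's) problem \<Rightarrow> ('i \<Rightarrow> 's set) \<Rightarrow> 'i \<Rightarrow> 's \<Rightarrow> bool" where
  "rejected P R i s \<longleftrightarrow> applies P R i = Some s \<and>
     \<not> card {j\<in>students P. applies P R j = Some s \<and> (j, i) \<in> prio P s} < quota P s"

definition DA_step :: "('i, 's) problem \<Rightarrow> ('i \<Rightarrow> 's set) \<Rightarrow> ('i \<Rightarrow> 's set)" where
  "DA_step P R = (\<lambda>i. R i \<union> {s. rejected P R i s})"

text \<open>The algorithm stops when a round has no new rejection, i.e. at a fixed point of
  DA_step; since every non-final round adds a rejection and there are at most
  card I * card S possible rejections, the final state is reached after at most
  that many rounds, and further rounds do not change it.\<close>

definition DA_state :: "('i, 's) problem \<Rightarrow> ('i \<Rightarrow> 's set)" where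
  "DA_state P = (DA_step P ^^ (card (students P) * card (schools P))) (\<lambda>i. {})"

definition DA :: "('i, 's) problem \<Rightarrow> 'i \<Rightarrow> 's" where
  "DA P i = the (applies P (DA_state P) i)"

definition M_set :: "('i, 's) problem \<Rightarrow> ('i \<Rightarrow> 's) set" where
  "M_set P = {\<mu>. pareto_efficient P \<mu> \<and> weakly_dominates P \<mu> (DA P)}"

definition unimprovable :: "('i, 's) problem \<Rightarrow> 'i \<Rightarrow> bool" where
  "unimprovable P i \<longleftrightarrow> (\<forall>\<mu>\<in>M_set P. \<mu> i = DA P i)"

definition envies :: "('i, 's) problem \<Rightarrow> 'i \<Rightarrow> 'i \<Rightarrow> bool" where
  "envies P i j \<longleftrightarrow> i \<in> students P \<and> j \<in> students P \<and> (DA P j, DA P i) \<in> pref P i"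

definition on_envy_cycle :: "('i, 's) problem \<Rightarrow> 'i \<Rightarrow> bool" where
  "on_envy_cycle P i \<longleftrightarrow>
     (\<exists>k::nat. \<exists>c::nat \<Rightarrow> 'i. k \<ge> 1 \<and> c 0 = i \<and> (\<forall>n\<le>k. c n \<in> students P) \<and>
        inj_on c {0..k} \<and> (\<forall>n<k. envies P (c n) (c (Suc n))) \<and> envies P (c k) i)"

end

theory Submission
  imports Defs
begin

lemma rank_bij:
  assumes fin: "finite A" and tr: "trans r" and ir: "irrefl r" and tot: "total_on A r"
  shows "bij_betw (\<lambda>x. card {y\<in>A. (y,x)\<in>r}) A {..<card A}"
proof -
  let ?rk = "\<lambda>x. card {y\<in>A. (y,x)\<in>r}"
  have inj: "inj_on ?rk A"
  proof (rule inj_onI, rule ccontr)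
    fix x y assume x: "x\<in>A" and y: "y\<in>A" and eq: "?rk x = ?rk y" and ne: "x \<noteq> y"
    have lt: "?rk a < ?rk b" if "a\<in>A" "b\<in>A" "(a,b)\<in>r" for a b
    proof (rule psubset_card_mono)
      show "finite {y\<in>A. (y,b)\<in>r}" using fin by simp
      show "{y\<in>A. (y,a)\<in>r} \<subset> {y\<in>A. (y,b)\<in>r}"
        using that tr ir unfolding trans_def irrefl_def by blast
    qed
    from tot x y ne have "(x,y)\<in>r \<or> (y,x)\<in>r" unfolding total_on_def by blast
    then show False using lt[OF x y] lt[OF y x] eq by auto
  qed
  have sub: "?rk ` A \<subseteq> {..<card A}"
  proof
    fix z assume "z \<in> ?rk ` A"
    then obtain x where x: "x\<in>A" and z: "z = ?rk x" by blast
    have "{y\<in>A. (y,x)\<in>r} \<subset> A" using x ir unfolding irrefl_def by blast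
    then show "z \<in> {..<card A}" using z fin by (simp add: psubset_card_mono)
  qed
  have "card (?rk ` A) = card {..<card A}" using card_image[OF inj] by simp
  then have "?rk ` A = {..<card A}" using sub by (simp add: card_subset_eq)
  then show ?thesis using inj unfolding bij_betw_def by simp
qed

lemma rank_card_le:
  assumes fin: "finite A" and tr: "trans r" and ir: "irrefl r" and tot: "total_on A r"
    and all: "\<forall>x\<in>A. card {y\<in>A. (y,x)\<in>r} < q"
  shows "card A \<le> q"
proof -
  let ?rk = "\<lambda>x. card {y\<in>A. (y,x)\<in>r}"
  have b: "bij_betw ?rk A {..<card A}" by (rule rank_bij[OF assms(1-4)])
  have "?rk ` A \<subseteq> {..<q}" using all by auto
  then have "card (?rk ` A) \<le> card {..<q}" by (intro card_mono) auto
  then show ?thesis using b by (simp add: bij_betw_def card_image)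
qed

lemma rank_card_ge:
  assumes fin: "finite A" and tr: "trans r" and ir: "irrefl r" and tot: "total_on A r"
    and q: "q \<le> card A"
  shows "q \<le> card {x\<in>A. card {y\<in>A. (y,x)\<in>r} < q}"
proof -
  let ?rk = "\<lambda>x. card {y\<in>A. (y,x)\<in>r}"
  have b: "bij_betw ?rk A {..<card A}" by (rule rank_bij[OF assms(1-4)])
  have "?rk ` {x\<in>A. ?rk x < q} = {..<q}"
  proof
    show "?rk ` {x\<in>A. ?rk x < q} \<subseteq> {..<q}" by auto
    show "{..<q} \<subseteq> ?rk ` {x\<in>A. ?rk x < q}"
    proof
      fix n assume n: "n \<in> {..<q}"
      then have "n \<in> ?rk ` A" using b q unfolding bij_betw_def by auto
      then show "n \<in> ?rk ` {x\<in>A. ?rk x < q}" using n by auto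
    qed
  qed
  moreover have "inj_on ?rk {x\<in>A. ?rk x < q}"
    using b unfolding bij_betw_def by (auto intro: inj_on_subset)
  ultimately show ?thesis using card_image by fastforce
qed

lemma max_exists:
  assumes "finite X" "X \<noteq> {}" "trans r" "irrefl r" "total_on X r"
  shows "\<exists>s\<in>X. \<forall>t\<in>X - {s}. (s,t)\<in>r"
  using assms
proof (induction X rule: finite_ne_induct)
  case (singleton x) then show ?case by simp
next
  case (insert x F)
  have "total_on F r" using insert.prems unfolding total_on_def by blast
  then obtain s where s: "s\<in>F" "\<forall>t\<in>F - {s}. (s,t)\<in>r" using insert by blast
  have "x \<noteq> s" using s insert by blast
  then have "(x,s)\<in>r \<or> (s,x)\<in>r" using insert.prems s unfolding total_on_def by blast
  then show ?case
  proof
    assume xs: "(x,s)\<in>r"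
    have "\<forall>t\<in>insert x F - {x}. (x,t)\<in>r"
      using xs s insert.prems unfolding trans_def by blast
    then show ?thesis by blast
  next
    assume "(s,x)\<in>r" then show ?thesis using s by blast
  qed
qed

context
  fixes P :: "('i,'s) problem"
  assumes sc: "school_choice P"
begin

lemma finI: "finite (students P)" and finS: "finite (schools P)"
  using sc unfolding school_choice_def by auto

lemma pref_wf: assumes "j \<in> students P"
  shows "pref P j \<subseteq> schools P \<times> schools P" "trans (pref P j)" "irrefl (pref P j)"
    "total_on (schools P) (pref P j)"
  using sc assms unfolding school_choice_def strict_linear_order_on_def by auto

lemma prio_wf: assumes "s \<in> schools P"
  shows "prio P s \<subseteq> students P \<times> students P" "trans (prio P s)" "irrefl (prio P s)"
    "total_on (students P) (prio P s)"
  using sc assms unfolding school_choice_def strict_linear_order_on_def by auto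

lemma cap: "card (students P) \<le> (\<Sum>s\<in>schools P. quota P s)"
  using sc unfolding school_choice_def by auto

lemma pref_asym: assumes "j \<in> students P" "(a,b) \<in> pref P j" shows "(b,a) \<notin> pref P j"
  using pref_wf[OF assms(1)] assms(2) unfolding trans_def irrefl_def by blast

lemma pref_irr: assumes "j \<in> students P" shows "(a,a) \<notin> pref P j"
  using pref_wf[OF assms(1)] unfolding irrefl_def by blast

lemma pref_trans: assumes "j \<in> students P" "(a,b) \<in> pref P j" "(b,c) \<in> pref P j"
  shows "(a,c) \<in> pref P j"
  using pref_wf[OF assms(1)] assms(2,3) unfolding trans_def by blast

lemma best_Some:
  assumes j: "j \<in> students P" and X: "X \<subseteq> schools P" "X \<noteq> {}"
  shows "\<exists>s. best P j X = Some s \<and> s \<in> X \<and> (\<forall>t\<in>X - {s}. (s,t) \<in> pref P j)"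
proof -
  have fX: "finite X" using X finS finite_subset by blast
  have tot: "total_on X (pref P j)" using pref_wf(4)[OF j] X unfolding total_on_def by blast
  obtain s where s: "s\<in>X" "\<forall>t\<in>X - {s}. (s,t)\<in>pref P j"
    using max_exists[OF fX X(2) pref_wf(2,3)[OF j] tot] by blast
  have uniq: "s' = s" if "s' \<in> X \<and> (\<forall>t\<in>X - {s'}. (s',t) \<in> pref P j)" for s'
  proof (rule ccontr)
    assume ne: "s' \<noteq> s"
    then have "(s',s) \<in> pref P j" "(s,s') \<in> pref P j" using that s by auto
    then show False using pref_asym[OF j] by blast
  qed
  have "(THE s. s \<in> X \<and> (\<forall>t\<in>X - {s}. (s,t) \<in> pref P j)) = s"
    apply (rule the_equality)
     apply (rule conjI, rule s(1), rule s(2))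
    apply (erule uniq)
    done
  then have "best P j X = Some s" using X(2) unfolding best_def by simp
  then show ?thesis using s by blast
qed

lemma applies_SomeD:
  assumes j: "j \<in> students P" and a: "applies P R j = Some s"
  shows "s \<in> schools P - R j \<and> (\<forall>t\<in>(schools P - R j) - {s}. (s,t) \<in> pref P j)"
proof -
  have "schools P - R j \<noteq> {}" using a unfolding applies_def best_def by (auto split: if_splits)
  then show ?thesis using best_Some[OF j, of "schools P - R j"] a unfolding applies_def by auto
qed

lemma applies_None: "applies P R j = None \<longleftrightarrow> schools P - R j = {}"
  unfolding applies_def best_def by auto

lemma rejectedD: assumes "j \<in> students P" "rejected P R j s"
  shows "s \<in> schools P - R j"
  using assms applies_SomeD[of j R s] unfolding rejected_def by auto

definition inv :: "('i \<Rightarrow> 's set) \<Rightarrow> bool" where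
  "inv R \<longleftrightarrow> (\<forall>j\<in>students P. R j \<subseteq> schools P) \<and>
     (\<forall>s\<in>schools P. (\<exists>j\<in>students P. s \<in> R j) \<longrightarrow>
        quota P s \<le> card {j\<in>students P. applies P R j = Some s})"

lemma inv_not_exhausted:
  assumes inv: "inv R" and j: "j \<in> students P"
  shows "applies P R j \<noteq> None"
proof
  assume N: "applies P R j = None"
  then have all: "schools P \<subseteq> R j" using applies_None by auto
  let ?A = "\<lambda>s. {k\<in>students P. applies P R k = Some s}"
  have q: "quota P s \<le> card (?A s)" if "s \<in> schools P" for s
    using inv that all j unfolding inv_def by blast
  have "card (students P) \<le> (\<Sum>s\<in>schools P. quota P s)" by (rule cap)
  also have "\<dots> \<le> (\<Sum>s\<in>schools P. card (?A s))" using q by (intro sum_mono) auto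
  also have "\<dots> = card (\<Union>s\<in>schools P. ?A s)"
    using finS finI by (intro card_UN_disjoint[symmetric]) auto
  also have "\<dots> \<le> card (students P - {j})"
    using finI N by (intro card_mono) auto
  also have "\<dots> < card (students P)" by (rule card_Diff1_less[OF finI j])
  finally show False by simp
qed


lemma DA_step_keep:
  assumes "\<forall>t. \<not> rejected P R x t"
  shows "DA_step P R x = R x"
  using assms unfolding DA_step_def by auto

lemma rejected_rank:
  "rejected P R x s \<longleftrightarrow> applies P R x = Some s \<and>
     \<not> card {y\<in>{j\<in>students P. applies P R j = Some s}. (y,x)\<in>prio P s} < quota P s"
proof -
  have "{j\<in>students P. applies P R j = Some s \<and> (j, x) \<in> prio P s} =
        {y\<in>{j\<in>students P. applies P R j = Some s}. (y,x)\<in>prio P s}" by blast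
  then show ?thesis unfolding rejected_def by simp
qed

lemma inv_step:
  assumes inv: "inv R"
  shows "inv (DA_step P R)"
  unfolding inv_def
proof (intro conjI ballI impI)
  fix j assume j: "j \<in> students P"
  show "DA_step P R j \<subseteq> schools P"
    using inv j rejectedD[OF j] unfolding inv_def DA_step_def by blast
next
  fix s assume s: "s \<in> schools P"
  assume "\<exists>j\<in>students P. s \<in> DA_step P R j"
  then obtain j0 where j0: "j0 \<in> students P" "s \<in> DA_step P R j0" by blast
  define A where "A = {j\<in>students P. applies P R j = Some s}"
  define A' where "A' = {j\<in>students P. applies P (DA_step P R) j = Some s}"
  define rk where "rk = (\<lambda>x. card {y\<in>A. (y,x)\<in>prio P s})"
  have finA: "finite A" "finite A'" using finI unfolding A_def A'_def by auto
  have AI: "A \<subseteq> students P" unfolding A_def by auto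
  have totA: "total_on A (prio P s)" using prio_wf(4)[OF s] AI unfolding total_on_def by blast
  have rej: "rejected P R x s \<longleftrightarrow> x \<in> A \<and> \<not> rk x < quota P s" if "x \<in> students P" for x
    using that rejected_rank[of R x s] unfolding A_def rk_def by auto
  have keep: "x \<in> A'" if "x \<in> A" "\<not> rejected P R x s" for x
  proof -
    have nr: "\<forall>t. \<not> rejected P R x t"
    proof
      fix t show "\<not> rejected P R x t"
      proof
        assume "rejected P R x t"
        then have "applies P R x = Some t" unfolding rejected_def by simp
        then have "t = s" using that(1) unfolding A_def by simp
        then show False using that \<open>rejected P R x t\<close> by simp
      qed
    qed
    have "applies P (DA_step P R) x = applies P R x"
      unfolding applies_def using DA_step_keep[OF nr] by simp
    then show ?thesis using that(1) unfolding A_def A'_def by simp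
  qed
  show "quota P s \<le> card A'"
  proof (cases "\<exists>x\<in>A. rejected P R x s")
    case True
    then obtain x where x: "x \<in> A" "rejected P R x s" by blast
    have "rk x < card A" using rank_bij[OF finA(1) prio_wf(2,3)[OF s] totA] x(1)
      unfolding rk_def bij_betw_def by auto
    moreover have "\<not> rk x < quota P s" using rej x AI by blast
    ultimately have qA: "quota P s \<le> card A" by simp
    have "quota P s \<le> card {x\<in>A. rk x < quota P s}"
      using rank_card_ge[OF finA(1) prio_wf(2,3)[OF s] totA qA] unfolding rk_def by simp
    also have "\<dots> \<le> card A'"
    proof (rule card_mono[OF finA(2)])
      show "{x\<in>A. rk x < quota P s} \<subseteq> A'"
        using keep rej AI by blast
    qed
    finally show ?thesis .
  next
    case False
    have "s \<in> R j0"
    proof (rule ccontr)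
      assume "s \<notin> R j0"
      then have "rejected P R j0 s" using j0(2) unfolding DA_step_def by simp
      then have "j0 \<in> A" using rej j0(1) by blast
      then show False using False \<open>rejected P R j0 s\<close> by blast
    qed
    then have "quota P s \<le> card A" using inv s j0(1) unfolding inv_def A_def by blast
    also have "\<dots> \<le> card A'" using keep False by (intro card_mono[OF finA(2)]) blast
    finally show ?thesis .
  qed
qed

definition fixd :: "('i \<Rightarrow> 's set) \<Rightarrow> bool" where
  "fixd R \<longleftrightarrow> (\<forall>j\<in>students P. \<forall>s. \<not> rejected P R j s)"

lemma rejected_agree:
  assumes "\<forall>j\<in>students P. R j = R' j" "j \<in> students P"
  shows "rejected P R j s = rejected P R' j s"
proof -
  have ap: "applies P R k = applies P R' k" if "k \<in> students P" for k
    using assms(1) that unfolding applies_def by simp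
  have "{k\<in>students P. applies P R k = Some s \<and> (k, j) \<in> prio P s} =
        {k\<in>students P. applies P R' k = Some s \<and> (k, j) \<in> prio P s}"
    using ap by (intro Collect_cong) auto
  then show ?thesis unfolding rejected_def using ap[OF assms(2)] by simp
qed

definition meas :: "('i \<Rightarrow> 's set) \<Rightarrow> nat" where
  "meas R = (\<Sum>j\<in>students P. card (R j))"

lemma inv_init: "inv (\<lambda>_. {})" unfolding inv_def by simp

lemma progress:
  "inv ((DA_step P ^^ n) (\<lambda>_. {})) \<and>
   (fixd ((DA_step P ^^ n) (\<lambda>_. {})) \<or> n \<le> meas ((DA_step P ^^ n) (\<lambda>_. {})))"
proof (induction n)
  case 0 then show ?case using inv_init by simp
next
  case (Suc n)
  define R where "R = (DA_step P ^^ n) (\<lambda>_. {})"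
  have R': "(DA_step P ^^ Suc n) (\<lambda>_. {}) = DA_step P R" unfolding R_def by simp
  have invR: "inv R" and disj: "fixd R \<or> n \<le> meas R" using Suc unfolding R_def by auto
  have inv': "inv (DA_step P R)" by (rule inv_step[OF invR])
  have "fixd (DA_step P R) \<or> Suc n \<le> meas (DA_step P R)"
  proof (cases "fixd R")
    case True
    have ag: "\<forall>j\<in>students P. R j = DA_step P R j"
      using True unfolding fixd_def DA_step_def by auto
    have "fixd (DA_step P R)" unfolding fixd_def
    proof (intro ballI allI)
      fix j s assume j: "j \<in> students P"
      show "\<not> rejected P (DA_step P R) j s"
        using rejected_agree[OF ag j, of s] True j unfolding fixd_def by simp
    qed
    then show ?thesis by simp
  next
    case False
    then obtain j s where js: "j \<in> students P" "rejected P R j s" unfolding fixd_def by blast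
    have sub: "R k \<subseteq> schools P" if "k \<in> students P" for k using invR that unfolding inv_def by blast
    have sub': "DA_step P R k \<subseteq> schools P" if "k \<in> students P" for k
      using inv' that unfolding inv_def by blast
    have "meas R < meas (DA_step P R)"
      unfolding meas_def
    proof (rule sum_strict_mono_ex1[OF finI])
      show "\<forall>x\<in>students P. card (R x) \<le> card (DA_step P R x)"
      proof
        fix x assume x: "x \<in> students P"
        have "finite (DA_step P R x)" using sub'[OF x] finS by (rule finite_subset)
        moreover have "R x \<subseteq> DA_step P R x" unfolding DA_step_def by (rule Un_upper1)
        ultimately show "card (R x) \<le> card (DA_step P R x)" by (rule card_mono)
      qed
      have s1: "s \<in> DA_step P R j" using js(2) unfolding DA_step_def by simp
      have s2: "s \<notin> R j" using rejectedD[OF js] by simp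
      have "R j \<subseteq> DA_step P R j" unfolding DA_step_def by (rule Un_upper1)
      moreover have "R j \<noteq> DA_step P R j" using s1 s2 by metis
      ultimately have "R j \<subset> DA_step P R j" by (rule psubsetI)
      then have "card (R j) < card (DA_step P R j)"
        by (rule psubset_card_mono[OF finite_subset[OF sub'[OF js(1)] finS]])
      then show "\<exists>a\<in>students P. card (R a) < card (DA_step P R a)" using js(1) by blast
    qed
    then show ?thesis using disj False by simp
  qed
  then show ?case using inv' R' by simp
qed

lemma final: "inv (DA_state P) \<and> fixd (DA_state P)"
proof -
  define N where "N = card (students P) * card (schools P)"
  have pr: "inv (DA_state P) \<and> (fixd (DA_state P) \<or> N \<le> meas (DA_state P))"
    using progress[of N] unfolding DA_state_def N_def by simp
  have "fixd (DA_state P)"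
  proof (cases "students P = {}")
    case True then show ?thesis unfolding fixd_def by simp
  next
    case False
    have lt: "card (DA_state P j) < card (schools P)" if "j \<in> students P" for j
    proof -
      have "DA_state P j \<subseteq> schools P" using pr that unfolding inv_def by blast
      moreover have "DA_state P j \<noteq> schools P"
      proof -
        have "inv (DA_state P)" using pr by simp
        then have "applies P (DA_state P) j \<noteq> None" using that by (rule inv_not_exhausted)
        then have "schools P - DA_state P j \<noteq> {}" by (simp add: applies_None)
        then show ?thesis by auto
      qed
      ultimately have "DA_state P j \<subset> schools P" by (rule psubsetI)
      then show ?thesis using finS by (rule psubset_card_mono[rotated])
    qed
    have "meas (DA_state P) < (\<Sum>j\<in>students P. card (schools P))"
      unfolding meas_def using lt finI False by (intro sum_strict_mono) auto
    then have "meas (DA_state P) < N" unfolding N_def by simp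
    then show ?thesis using pr by simp
  qed
  then show ?thesis using pr by simp
qed


lemma DA_applies:
  assumes j: "j \<in> students P"
  shows "applies P (DA_state P) j = Some (DA P j) \<and> DA P j \<in> schools P - DA_state P j \<and>
         (\<forall>t\<in>(schools P - DA_state P j) - {DA P j}. (DA P j, t) \<in> pref P j)"
proof -
  have "applies P (DA_state P) j \<noteq> None"
    using final inv_not_exhausted j by simp
  then obtain s where s: "applies P (DA_state P) j = Some s" by blast
  then have "DA P j = s" unfolding DA_def by simp
  then show ?thesis using s applies_SomeD[OF j s] by simp
qed

lemma DA_set: "s \<in> schools P \<Longrightarrow>
  {k\<in>students P. applies P (DA_state P) k = Some s} = {k\<in>students P. DA P k = s}"
  using DA_applies by (intro Collect_cong) auto

lemma DA_matching: "is_matching P (DA P)"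
  unfolding is_matching_def
proof (intro conjI ballI)
  fix j assume "j \<in> students P" then show "DA P j \<in> schools P" using DA_applies by blast
next
  fix s assume s: "s \<in> schools P"
  define A where "A = {k\<in>students P. applies P (DA_state P) k = Some s}"
  have finA: "finite A" using finI unfolding A_def by simp
  have AI: "A \<subseteq> students P" unfolding A_def by auto
  have totA: "total_on A (prio P s)" using prio_wf(4)[OF s] AI unfolding total_on_def by blast
  have "\<forall>x\<in>A. card {y\<in>A. (y,x)\<in>prio P s} < quota P s"
  proof
    fix x assume x: "x \<in> A"
    have "\<not> rejected P (DA_state P) x s" using final x AI unfolding fixd_def by blast
    then show "card {y\<in>A. (y,x)\<in>prio P s} < quota P s"
      using x rejected_rank[of "DA_state P" x s] unfolding A_def by simp
  qed
  then have "card A \<le> quota P s" by (rule rank_card_le[OF finA prio_wf(2,3)[OF s] totA])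
  then show "card {k\<in>students P. DA P k = s} \<le> quota P s" using DA_set[OF s] unfolding A_def by simp
qed

lemma DA_full:
  assumes j: "j \<in> students P" and p: "(s, DA P j) \<in> pref P j"
  shows "quota P s \<le> card {k\<in>students P. DA P k = s}"
proof -
  have sS: "s \<in> schools P" using pref_wf(1)[OF j] p by blast
  have "s \<in> DA_state P j"
  proof (rule ccontr)
    assume "s \<notin> DA_state P j"
    moreover have "s \<noteq> DA P j" using p pref_irr[OF j] by metis
    ultimately have "(DA P j, s) \<in> pref P j" using DA_applies[OF j] sS by blast
    then show False using pref_asym[OF j p] by simp
  qed
  then have "quota P s \<le> card {k\<in>students P. applies P (DA_state P) k = Some s}"
    using final sS j unfolding inv_def by blast
  then show ?thesis using DA_set[OF sS] by simp
qed


lemma wp_trans: assumes "j \<in> students P" "weakly_prefers P j a b" "weakly_prefers P j b c"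
  shows "weakly_prefers P j a c"
  using assms pref_trans[OF assms(1)] unfolding weakly_prefers_def by blast

lemma wp_strict: assumes "j \<in> students P" "weakly_prefers P j a b" "(b,c) \<in> pref P j"
  shows "(a,c) \<in> pref P j"
  using assms pref_trans[OF assms(1)] unfolding weakly_prefers_def by blast

lemma wd_trans: "weakly_dominates P a b \<Longrightarrow> weakly_dominates P b c \<Longrightarrow> weakly_dominates P a c"
  unfolding weakly_dominates_def using wp_trans by blast

definition score :: "('i \<Rightarrow> 's) \<Rightarrow> nat" where
  "score \<nu> = (\<Sum>x\<in>students P. card {t\<in>schools P. (\<nu> x, t) \<in> pref P x})"

lemma score_term_mono:
  assumes x: "x \<in> students P" and w: "weakly_prefers P x a b"
  shows "card {t\<in>schools P. (b, t) \<in> pref P x} \<le> card {t\<in>schools P. (a, t) \<in> pref P x}"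
    and "(a,b) \<in> pref P x \<Longrightarrow>
      card {t\<in>schools P. (b, t) \<in> pref P x} < card {t\<in>schools P. (a, t) \<in> pref P x}"
proof -
  have sub: "{t\<in>schools P. (b, t) \<in> pref P x} \<subseteq> {t\<in>schools P. (a, t) \<in> pref P x}"
    using wp_strict[OF x w] by blast
  show "card {t\<in>schools P. (b, t) \<in> pref P x} \<le> card {t\<in>schools P. (a, t) \<in> pref P x}"
    using finS sub by (intro card_mono) auto
  assume ab: "(a,b) \<in> pref P x"
  have bS: "b \<in> schools P" using pref_wf(1)[OF x] ab by blast
  have "b \<notin> {t\<in>schools P. (b, t) \<in> pref P x}" using pref_irr[OF x] by simp
  moreover have "b \<in> {t\<in>schools P. (a, t) \<in> pref P x}" using bS ab by simp
  ultimately have "{t\<in>schools P. (b, t) \<in> pref P x} \<subset> {t\<in>schools P. (a, t) \<in> pref P x}"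
    using sub by blast
  then show "card {t\<in>schools P. (b, t) \<in> pref P x} < card {t\<in>schools P. (a, t) \<in> pref P x}"
    using finS by (intro psubset_card_mono) auto
qed

lemma score_strict: assumes "dominates P \<nu> \<mu>" shows "score \<mu> < score \<nu>"
proof -
  have w: "weakly_dominates P \<nu> \<mu>" and ex: "\<exists>j\<in>students P. (\<nu> j, \<mu> j) \<in> pref P j"
    using assms unfolding dominates_def by auto
  show ?thesis unfolding score_def
  proof (rule sum_strict_mono_ex1[OF finI])
    show "\<forall>x\<in>students P. card {t\<in>schools P. (\<mu> x, t) \<in> pref P x}
         \<le> card {t\<in>schools P. (\<nu> x, t) \<in> pref P x}"
      using w score_term_mono(1) unfolding weakly_dominates_def by blast
    show "\<exists>x\<in>students P. card {t\<in>schools P. (\<mu> x, t) \<in> pref P x}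
         < card {t\<in>schools P. (\<nu> x, t) \<in> pref P x}"
      using ex w score_term_mono(2) unfolding weakly_dominates_def by blast
  qed
qed

lemma score_bound: "score \<nu> \<le> card (students P) * card (schools P)"
proof -
  have "score \<nu> \<le> (\<Sum>x\<in>students P. card (schools P))"
    unfolding score_def using finS by (intro sum_mono card_mono) auto
  then show ?thesis by simp
qed

lemma exists_PE:
  assumes m: "is_matching P \<mu>"
  shows "\<exists>\<nu>. pareto_efficient P \<nu> \<and> weakly_dominates P \<nu> \<mu>"
proof -
  define T where "T = {\<nu>. is_matching P \<nu> \<and> weakly_dominates P \<nu> \<mu>}"
  have muT: "\<mu> \<in> T" using m unfolding T_def weakly_dominates_def weakly_prefers_def by simp
  have fin: "finite (score ` T)"
    by (rule finite_subset[of _ "{..card (students P) * card (schools P)}"]) (use score_bound in auto)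
  have ne: "score ` T \<noteq> {}" using muT by blast
  obtain \<nu> where nu: "\<nu> \<in> T" "score \<nu> = Max (score ` T)"
    using Max_in[OF fin ne] by auto
  have "pareto_efficient P \<nu>"
    unfolding pareto_efficient_def
  proof (intro conjI notI)
    show "is_matching P \<nu>" using nu unfolding T_def by simp
    assume "\<exists>\<nu>'. is_matching P \<nu>' \<and> dominates P \<nu>' \<nu>"
    then obtain \<nu>' where n': "is_matching P \<nu>'" "dominates P \<nu>' \<nu>" by blast
    have "weakly_dominates P \<nu>' \<mu>"
      using wd_trans n'(2) nu(1) unfolding dominates_def T_def by blast
    then have "\<nu>' \<in> T" using n' unfolding T_def by simp
    then have "score \<nu>' \<le> score \<nu>" using nu(2) fin by simp
    then show False using score_strict[OF n'(2)] by simp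
  qed
  then show ?thesis using nu unfolding T_def by blast
qed


lemma cycle_improvable:
  assumes i: "i \<in> students P" and cyc: "on_envy_cycle P i"
  shows "\<exists>\<mu>\<in>M_set P. \<mu> i \<noteq> DA P i"
proof -
  obtain k c where k: "k \<ge> 1" and c0: "c 0 = i" and cI: "\<forall>n\<le>k. c n \<in> students P"
    and inj: "inj_on c {0..k}" and env: "\<forall>n<k. envies P (c n) (c (Suc n))"
    and envk: "envies P (c k) i"
    using cyc unfolding on_envy_cycle_def by blast
  define C where "C = c ` {0..k}"
  define \<sigma> where "\<sigma> = (\<lambda>n::nat. if n < k then Suc n else 0)"
  define g where "g = inv_into {0..k} c"
  define \<pi> where "\<pi> = (\<lambda>x. if x \<in> C then c (\<sigma> (g x)) else x)"
  define \<mu> where "\<mu> = (\<lambda>x. DA P (\<pi> x))"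
  have \<sigma>k: "\<sigma> n \<in> {0..k}" if "n \<le> k" for n using that unfolding \<sigma>_def by auto
  have \<pi>c: "\<pi> (c n) = c (\<sigma> n)" if "n \<le> k" for n
  proof -
    have "g (c n) = n" unfolding g_def using inj that by (simp add: inv_into_f_f)
    moreover have "c n \<in> C" using that unfolding C_def by auto
    ultimately show ?thesis unfolding \<pi>_def by simp
  qed
  have envn: "envies P (c n) (c (\<sigma> n))" if "n \<le> k" for n
  proof (cases "n < k")
    case True then show ?thesis using env unfolding \<sigma>_def by simp
  next
    case False then have "n = k" using that by simp
    then show ?thesis using envk c0 unfolding \<sigma>_def by simp
  qed
  have CI: "C \<subseteq> students P" using cI unfolding C_def by auto
  have \<pi>I: "\<pi> x \<in> students P" if "x \<in> students P" for x
  proof (cases "x \<in> C")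
    case True
    then obtain n where n: "n \<le> k" "x = c n" unfolding C_def by auto
    then show ?thesis using \<pi>c \<sigma>k cI by simp
  next
    case False then show ?thesis using that unfolding \<pi>_def by simp
  qed
  have \<pi>C: "\<pi> x \<in> C" if xC: "x \<in> C" for x
  proof -
    obtain n where n: "n \<le> k" "x = c n" using xC unfolding C_def by auto
    then show ?thesis using \<pi>c \<sigma>k unfolding C_def by auto
  qed
  have \<pi>inj: "inj_on \<pi> (students P)"
  proof (rule inj_onI)
    fix x y assume x: "x \<in> students P" and y: "y \<in> students P" and eq: "\<pi> x = \<pi> y"
    show "x = y"
    proof (cases "x \<in> C"; cases "y \<in> C")
      assume xC: "x \<in> C" and yC: "y \<in> C"
      obtain a where a: "a \<le> k" "x = c a" using xC unfolding C_def by auto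
      obtain b where b: "b \<le> k" "y = c b" using yC unfolding C_def by auto
      have "c (\<sigma> a) = c (\<sigma> b)" using eq a b \<pi>c by simp
      then have "\<sigma> a = \<sigma> b" using inj \<sigma>k[OF a(1)] \<sigma>k[OF b(1)] by (meson inj_onD)
      then have "a = b" using a(1) b(1) unfolding \<sigma>_def by (auto split: if_splits)
      then show ?thesis using a b by simp
    next
      assume xC: "x \<in> C" and yC: "y \<notin> C"
      then show ?thesis using eq \<pi>C[OF xC] unfolding \<pi>_def by simp
    next
      assume xC: "x \<notin> C" and yC: "y \<in> C"
      then show ?thesis using eq \<pi>C[OF yC] unfolding \<pi>_def by simp
    next
      assume xC: "x \<notin> C" and yC: "y \<notin> C"
      then show ?thesis using eq unfolding \<pi>_def by simp
    qed
  qed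
  have \<pi>surj: "\<pi> ` students P = students P"
    by (rule endo_inj_surj[OF finI _ \<pi>inj]) (use \<pi>I in auto)
  have strict: "(\<mu> x, DA P x) \<in> pref P x" if xC: "x \<in> C" for x
  proof -
    obtain n where n: "n \<le> k" "x = c n" using xC unfolding C_def by auto
    then show ?thesis using envn[OF n(1)] \<pi>c[OF n(1)] unfolding \<mu>_def envies_def by simp
  qed
  have wd: "weakly_dominates P \<mu> (DA P)"
    unfolding weakly_dominates_def weakly_prefers_def
  proof
    fix x assume "x \<in> students P"
    show "\<mu> x = DA P x \<or> (\<mu> x, DA P x) \<in> pref P x"
    proof (cases "x \<in> C")
      case True then show ?thesis using strict by simp
    next
      case False then show ?thesis unfolding \<mu>_def \<pi>_def by simp
    qed
  qed
  have iC: "i \<in> C" using c0 unfolding C_def by force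
  have mm: "is_matching P \<mu>"
    unfolding is_matching_def
  proof (intro conjI ballI)
    fix x assume "x \<in> students P"
    then show "\<mu> x \<in> schools P" unfolding \<mu>_def using \<pi>I DA_matching
      unfolding is_matching_def by blast
  next
    fix s assume s: "s \<in> schools P"
    have img: "\<pi> ` {x\<in>students P. \<mu> x = s} = {y\<in>students P. DA P y = s}"
    proof
      show "\<pi> ` {x\<in>students P. \<mu> x = s} \<subseteq> {y\<in>students P. DA P y = s}"
        using \<pi>I unfolding \<mu>_def by auto
      show "{y\<in>students P. DA P y = s} \<subseteq> \<pi> ` {x\<in>students P. \<mu> x = s}"
      proof
        fix y assume y: "y \<in> {y\<in>students P. DA P y = s}"
        then obtain x where x: "x \<in> students P" "y = \<pi> x" using \<pi>surj by blast
        then show "y \<in> \<pi> ` {x\<in>students P. \<mu> x = s}" using y unfolding \<mu>_def by auto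
      qed
    qed
    have "card {x\<in>students P. \<mu> x = s} = card {y\<in>students P. DA P y = s}"
      using card_image[OF inj_on_subset[OF \<pi>inj]] img by (metis (no_types, lifting) mem_Collect_eq subsetI)
    also have "\<dots> \<le> quota P s" using DA_matching s unfolding is_matching_def by blast
    finally show "card {x\<in>students P. \<mu> x = s} \<le> quota P s" .
  qed
  obtain \<nu> where nu: "pareto_efficient P \<nu>" "weakly_dominates P \<nu> \<mu>"
    using exists_PE[OF mm] by blast
  have "\<nu> \<in> M_set P" unfolding M_set_def using nu wd wd_trans by blast
  moreover have "(\<nu> i, DA P i) \<in> pref P i"
    using wp_strict[OF i _ strict[OF iC]] nu(2) i unfolding weakly_dominates_def by blast
  then have "\<nu> i \<noteq> DA P i" using pref_irr[OF i] by metis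
  ultimately show ?thesis by blast
qed


lemma sum_card_fibers:
  assumes "finite J" "f ` J \<subseteq> S" "finite S"
  shows "(\<Sum>s\<in>S. card {x\<in>J. f x = s}) = card J"
proof -
  have "(\<Sum>s\<in>S. card {x\<in>J. f x = s}) = card (\<Union>s\<in>S. {x\<in>J. f x = s})"
    using assms by (intro card_UN_disjoint[symmetric]) auto
  moreover have "(\<Union>s\<in>S. {x\<in>J. f x = s}) = J" using assms(2) by auto
  ultimately show ?thesis by simp
qed

lemma funpow_cancel:
  assumes inj: "inj_on f J" and img: "f ` J \<subseteq> J" and x: "x \<in> J"
  shows "(f^^a) x = (f^^(a+d)) x \<Longrightarrow> (f^^d) x = x"
proof (induction a)
  case 0 then show ?case by simp
next
  case (Suc a)
  have inJ: "(f^^m) x \<in> J" for m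
    by (induction m) (use x img in auto)
  have "f ((f^^a) x) = f ((f^^(a+d)) x)" using Suc.prems by simp
  then have "(f^^a) x = (f^^(a+d)) x" using inj inJ by (meson inj_onD)
  then show ?case by (rule Suc.IH)
qed

lemma improvable_cycle:
  assumes i: "i \<in> students P" and mu: "\<mu> \<in> M_set P" and ne: "\<mu> i \<noteq> DA P i"
  shows "on_envy_cycle P i"
proof -
  have mm: "is_matching P \<mu>" and wd: "weakly_dominates P \<mu> (DA P)"
    using mu unfolding M_set_def pareto_efficient_def by auto
  define J where "J = {x\<in>students P. \<mu> x \<noteq> DA P x}"
  have JI: "J \<subseteq> students P" unfolding J_def by auto
  have finJ: "finite J" using finI JI finite_subset by blast
  have iJ: "i \<in> J" using i ne unfolding J_def by simp
  have imp: "(\<mu> x, DA P x) \<in> pref P x" if "x \<in> J" for x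
    using wd that unfolding J_def weakly_dominates_def weakly_prefers_def by auto
  have muS: "\<mu> ` J \<subseteq> schools P" using mm JI unfolding is_matching_def by blast
  have DAS: "DA P ` J \<subseteq> schools P" using DA_matching JI unfolding is_matching_def by blast
  have le: "card {x\<in>J. \<mu> x = s} \<le> card {x\<in>J. DA P x = s}" if s: "s \<in> schools P" for s
  proof (cases "{x\<in>J. \<mu> x = s} = {}")
    case True
    have "card {x\<in>J. \<mu> x = s} = 0" by (subst True) simp
    then show ?thesis by simp
  next
    case False
    then obtain x where x: "x \<in> J" "\<mu> x = s" by blast
    have q: "quota P s \<le> card {y\<in>students P. DA P y = s}"
      using DA_full[of x s] imp[OF x(1)] x JI by auto
    define Oth where "Oth = {y\<in>students P - J. DA P y = s}"
    have e1: "{y\<in>students P. \<mu> y = s} = {x\<in>J. \<mu> x = s} \<union> Oth"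
      unfolding Oth_def J_def by auto
    have e2: "{y\<in>students P. DA P y = s} = {x\<in>J. DA P x = s} \<union> Oth"
      unfolding Oth_def J_def by auto
    have finOth: "finite Oth" using finI unfolding Oth_def by simp
    have d1: "{x\<in>J. \<mu> x = s} \<inter> Oth = {}" and d2: "{x\<in>J. DA P x = s} \<inter> Oth = {}"
      unfolding Oth_def by auto
    have "card {x\<in>J. \<mu> x = s} + card Oth = card {y\<in>students P. \<mu> y = s}"
      using e1 d1 finOth finJ by (simp add: card_Un_disjoint)
    also have "\<dots> \<le> quota P s" using mm s unfolding is_matching_def by blast
    also have "\<dots> \<le> card {y\<in>students P. DA P y = s}" by (rule q)
    also have "\<dots> = card {x\<in>J. DA P x = s} + card Oth"
      using e2 d2 finOth finJ by (simp add: card_Un_disjoint)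
    finally show ?thesis by simp
  qed
  have eq: "card {x\<in>J. \<mu> x = s} = card {x\<in>J. DA P x = s}" if s: "s \<in> schools P" for s
  proof (rule ccontr)
    assume "card {x\<in>J. \<mu> x = s} \<noteq> card {x\<in>J. DA P x = s}"
    then have lt: "card {x\<in>J. \<mu> x = s} < card {x\<in>J. DA P x = s}" using le[OF s] by simp
    have "(\<Sum>s\<in>schools P. card {x\<in>J. \<mu> x = s}) < (\<Sum>s\<in>schools P. card {x\<in>J. DA P x = s})"
      by (rule sum_strict_mono_ex1[OF finS]) (use le lt s in auto)
    then show False using sum_card_fibers[OF finJ muS finS] sum_card_fibers[OF finJ DAS finS] by simp
  qed
  have "\<forall>s\<in>schools P. \<exists>h. bij_betw h {x\<in>J. \<mu> x = s} {x\<in>J. DA P x = s}"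
    using eq finJ by (intro ballI finite_same_card_bij) auto
  then obtain H where H: "\<And>s. s \<in> schools P \<Longrightarrow> bij_betw (H s) {x\<in>J. \<mu> x = s} {x\<in>J. DA P x = s}"
    by metis
  define \<sigma> where "\<sigma> = (\<lambda>x. H (\<mu> x) x)"
  have \<sigma>J: "\<sigma> x \<in> J \<and> DA P (\<sigma> x) = \<mu> x" if x: "x \<in> J" for x
  proof -
    have "\<mu> x \<in> schools P" using muS x by blast
    then have "H (\<mu> x) x \<in> {y\<in>J. DA P y = \<mu> x}"
      using H x unfolding bij_betw_def by blast
    then show ?thesis unfolding \<sigma>_def by simp
  qed
  have \<sigma>inj: "inj_on \<sigma> J"
  proof (rule inj_onI)
    fix x y assume x: "x \<in> J" and y: "y \<in> J" and e: "\<sigma> x = \<sigma> y"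
    have mxy: "\<mu> x = \<mu> y" using \<sigma>J[OF x] \<sigma>J[OF y] e by metis
    have sS: "\<mu> x \<in> schools P" using muS x by blast
    have "inj_on (H (\<mu> x)) {z\<in>J. \<mu> z = \<mu> x}" using H[OF sS] unfolding bij_betw_def by blast
    moreover have "H (\<mu> x) x = H (\<mu> x) y" using e mxy unfolding \<sigma>_def by simp
    ultimately show "x = y" using x y mxy by (auto dest: inj_onD)
  qed
  have \<sigma>img: "\<sigma> ` J \<subseteq> J" using \<sigma>J by blast
  define c where "c = (\<lambda>n. (\<sigma>^^n) i)"
  have cJ: "c n \<in> J" for n
  proof (induction n)
    case 0 then show ?case unfolding c_def using iJ by simp
  next
    case (Suc n)
    have "c (Suc n) = \<sigma> (c n)" unfolding c_def by simp
    then show ?case using \<sigma>J[OF Suc.IH] by simp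
  qed
  have cS: "c (Suc n) = \<sigma> (c n)" for n unfolding c_def by simp
  have cancel: "c d = i" if "c a = c (a + d)" for a d
    using funpow_cancel[OF \<sigma>inj \<sigma>img iJ, of a d] that unfolding c_def by simp
  have "\<not> inj_on c {..card J}"
  proof
    assume "inj_on c {..card J}"
    then have "card (c ` {..card J}) = card J + 1" by (simp add: card_image)
    moreover have "card (c ` {..card J}) \<le> card J" by (rule card_mono[OF finJ]) (use cJ in blast)
    ultimately show False by simp
  qed
  then obtain a b where ab: "a \<noteq> b" "c a = c b" unfolding inj_on_def by blast
  have "\<exists>p. 0 < p \<and> c p = i"
  proof (cases "a < b")
    case True
    then have "c a = c (a + (b - a))" using ab by simp
    then have "c (b - a) = i" by (rule cancel)
    then show ?thesis using True by (intro exI[of _ "b - a"]) simp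
  next
    case False
    then have "b < a" using ab by simp
    then have "c b = c (b + (a - b))" using ab by simp
    then have "c (a - b) = i" by (rule cancel)
    then show ?thesis using \<open>b < a\<close> by (intro exI[of _ "a - b"]) simp
  qed
  define p where "p = (LEAST p. 0 < p \<and> c p = i)"
  have p: "0 < p" "c p = i" using LeastI_ex[OF \<open>\<exists>p. 0 < p \<and> c p = i\<close>] unfolding p_def by auto
  have pmin: "\<not> (0 < m \<and> c m = i)" if "m < p" for m
    using not_less_Least[of m "\<lambda>p. 0 < p \<and> c p = i"] that unfolding p_def by blast
  have c0: "c 0 = i" unfolding c_def by simp
  have c1: "c 1 \<noteq> i"
  proof
    assume "c 1 = i"
    then have "\<sigma> i = i" using cS[of 0] c0 by simp
    then have "DA P i = \<mu> i" using \<sigma>J[OF iJ] by simp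
    then show False using ne by simp
  qed
  define k where "k = p - 1"
  have k1: "k \<ge> 1" using p c1 unfolding k_def by (cases "p = 1") auto
  have kp: "Suc k = p" using p unfolding k_def by simp
  have edge: "envies P (c n) (c (Suc n))" for n
  proof -
    have cn: "c n \<in> J" by (rule cJ)
    have "c n \<in> students P" "c (Suc n) \<in> students P" using cJ JI by blast+
    moreover have "DA P (c (Suc n)) = \<mu> (c n)" using \<sigma>J[OF cn] cS[of n] by simp
    ultimately show ?thesis using imp[OF cn] unfolding envies_def by simp
  qed
  show ?thesis unfolding on_envy_cycle_def
  proof (intro exI conjI allI impI)
    show "1 \<le> k" by (rule k1)
    show "c 0 = i" by (rule c0)
    fix n show "n \<le> k \<Longrightarrow> c n \<in> students P" using cJ JI by blast
  next
    show "inj_on c {0..k}"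
    proof (rule inj_onI, rule ccontr)
      fix x y assume x: "x \<in> {0..k}" and y: "y \<in> {0..k}" and e: "c x = c y" and nxy: "x \<noteq> y"
      have gen: False if "u < v" "v \<le> k" "c u = c v" for u v
      proof -
        have "c u = c (u + (v - u))" using that by simp
        then have "c (v - u) = i" by (rule cancel)
        moreover have "v - u < p" "0 < v - u" using that kp by auto
        ultimately show False using pmin by blast
      qed
      show False
      proof (cases "x < y")
        case True then show ?thesis using gen[of x y] y e by simp
      next
        case False then have "y < x" using nxy by simp
        then show ?thesis using gen[of y x] x e by simp
      qed
    qed
  next
    fix n assume "n < k"
    show "envies P (c n) (c (Suc n))" by (rule edge)
  next
    show "envies P (c k) i" using edge[of k] kp p(2) by simp
  qed
qed


end


theorem proposition1:
  fixes P :: "('i, 's) problem" and i :: 'i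
  assumes "school_choice P" and "i \<in> students P"
  shows "unimprovable P i \<longleftrightarrow> \<not> on_envy_cycle P i"
proof
  assume u: "unimprovable P i"
  show "\<not> on_envy_cycle P i"
  proof
    assume "on_envy_cycle P i"
    then obtain \<mu> where "\<mu> \<in> M_set P" "\<mu> i \<noteq> DA P i"
      using cycle_improvable[OF assms] by blast
    then show False using u unfolding unimprovable_def by blast
  qed
next
  assume nc: "\<not> on_envy_cycle P i"
  show "unimprovable P i" unfolding unimprovable_def
  proof
    fix \<mu> assume mu: "\<mu> \<in> M_set P"
    show "\<mu> i = DA P i"
    proof (rule ccontr)
      assume "\<mu> i \<noteq> DA P i"
      then have "on_envy_cycle P i" using improvable_cycle[OF assms mu] by blast
      then show False using nc by blast
    qed
  qed
qed

end
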